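(* Let $\mathcal{T}$ be the scheme on $\mathcal{M}$ given by $$\mathcal{T}(\mathbf{p})_{2i}=M_{15/16}\big(p_{i-1},\,M_{1/3}(p_i,p_{i+1})\big),\qquad \mathcal{T}(\mathbf{p})_{2i+1}=M_{15/16}\big(p_{i+2},\,M_{2/3}(p_i,p_{i+1})\big),\quad i\in\mathbb{Z}.$$ Then $\delta(\mathcal{T}(\mathbf{p}))\le\tfrac56\,\delta(\mathbf{p})$ for all manifold data $\mathbf{p}$, and $\mathcal{T}$ is convergent.
   Context: $\mathcal{M}$ is a geodesically complete connected Riemannian manifold with distance $d$. For $p_0,p_1\in\mathcal{M}$ a minimal geodesic $\gamma:[0,1]\to\mathcal{M}$ from $p_0$ to $p_1$ is fixed and $M_t(p_0,p_1)=\gamma(t)$, $t\in[0,1]$, so all $M_t(p_0,p_1)$ lie on the same geodesic, $d(p_0,M_t(p_0,p_1))=t\,d(p_0,p_1)$, $d(M_t(p_0,p_1),p_1)=(1-t)d(p_0,p_1)$ and $d(M_s(p_0,p_1),M_t(p_0,p_1))=|s-t|d(p_0,p_1)$. Data $\mathbf{p}=(p_i)_{i\in\mathbb{Z}}$ with $\delta(\mathbf{p})=\sup_id(p_i,p_{i+1})<\infty$. This is the geodesic-inductive-mean adaptation of the linear quartic B-spline scheme with mask $\frac1{16}(1,5,10,10,5,1)$. Convergence: for every data $\mathbf{p}$ the curves $\mathrm{PG}_k(\mathcal{T}^k(\mathbf{p}))$ converge uniformly on $\mathbb{R}$, where $\mathrm{PG}_k(\mathbf{q})(t)=M_{2^kt-n}(q_n,q_{n+1})$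 for $t\in[2^{-k}n,2^{-k}(n+1))$. *)

theory Defs
  imports "HOL-Analysis.Analysis"
begin

text \<open>Abstract rendering of the geodesic averages M_t on a Riemannian manifold:
  a function Mg :: real => 'a => 'a => 'a on a metric space such that
  t |-> Mg t p0 p1, t in [0,1], is a (constant speed) minimal geodesic from p0 to p1.\<close>

definition geodesic_means :: "(real \<Rightarrow> 'a::metric_space \<Rightarrow> 'a \<Rightarrow> 'a) \<Rightarrow> bool" where
  "geodesic_means Mg \<longleftrightarrow>
     (\<forall>p0 p1 t. t \<in> {0..1} \<longrightarrow>
        dist p0 (Mg t p0 p1) = t * dist p0 p1 \<and>
        dist (Mg t p0 p1) p1 = (1 - t) * dist p0 p1) \<and>
     (\<forall>p0 p1 s t. s \<in> {0..1} \<longrightarrow> t \<in> {0..1} \<longrightarrow>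
        dist (Mg s p0 p1) (Mg t p0 p1) = \<bar>s - t\<bar> * dist p0 p1)"

definition delta :: "(int \<Rightarrow> 'a::metric_space) \<Rightarrow> ereal" where
  "delta p = (SUP i. ereal (dist (p i) (p (i + 1))))"

definition scheme :: "(real \<Rightarrow> 'a \<Rightarrow> 'a \<Rightarrow> 'a) \<Rightarrow> (int \<Rightarrow> 'a) \<Rightarrow> int \<Rightarrow> 'a" where
  "scheme Mg p j =
     (let i = j div 2 in
      if even j then Mg (15/16) (p (i - 1)) (Mg (1/3) (p i) (p (i + 1)))
      else Mg (15/16) (p (i + 2)) (Mg (2/3) (p i) (p (i + 1))))"

definition PG :: "(real \<Rightarrow> 'a \<Rightarrow> 'a \<Rightarrow> 'a) \<Rightarrow> nat \<Rightarrow> (int \<Rightarrow> 'a) \<Rightarrow> real \<Rightarrow> 'a" where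
  "PG Mg k q t = (let n = \<lfloor>2 ^ k * t\<rfloor> in Mg (2 ^ k * t - of_int n) (q n) (q (n + 1)))"

end

theory Submission
  imports Defs
begin

lemma gm1:
  assumes "geodesic_means Mg" "t \<in> {0..1}"
  shows "dist p0 (Mg t p0 p1) = t * dist p0 p1"
  using assms unfolding geodesic_means_def by blast

lemma gm2:
  assumes "geodesic_means Mg" "t \<in> {0..1}"
  shows "dist (Mg t p0 p1) p1 = (1 - t) * dist p0 p1"
  using assms unfolding geodesic_means_def by blast

lemma step_even:
  fixes p :: "int \<Rightarrow> 'a::metric_space"
  assumes gm: "geodesic_means Mg" and B: "\<And>i. dist (p i) (p (i+1)) \<le> D"
  shows "dist (scheme Mg p (2*i)) (scheme Mg p (2*i+1)) \<le> 5/6*D"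
proof -
  define a where "a = Mg (1/3) (p i) (p (i+1))"
  define b where "b = Mg (2/3) (p i) (p (i+1))"
  have e1: "scheme Mg p (2*i) = Mg (15/16) (p (i - 1)) a" by (simp add: scheme_def a_def)
  have e2: "scheme Mg p (2*i+1) = Mg (15/16) (p (i + 2)) b" by (simp add: scheme_def b_def)
  have B1: "dist (p (i-1)) (p i) \<le> D" using B[of "i-1"] by simp
  have B2: "dist (p i) (p (i+1)) \<le> D" using B[of i] by simp
  have B3: "dist (p (i+1)) (p (i+2)) \<le> D" using B[of "i+1"] by (simp add: add.assoc)
  have da: "dist (p i) a = 1/3 * dist (p i) (p (i+1))" using gm1[OF gm, of "1/3"] by (simp add: a_def)
  have db: "dist b (p (i+1)) = 1/3 * dist (p i) (p (i+1))" using gm2[OF gm, of "2/3"] by (simp add: b_def)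
  have dab: "dist a b = 1/3 * dist (p i) (p (i+1))"
    using gm unfolding geodesic_means_def a_def b_def by auto
  have t1: "dist (Mg (15/16) (p (i - 1)) a) a = 1/16 * dist (p (i-1)) a"
    using gm2[OF gm, of "15/16"] by simp
  have "dist (p (i-1)) a \<le> dist (p (i-1)) (p i) + dist (p i) a" by (rule dist_triangle)
  have t2: "dist (Mg (15/16) (p (i + 2)) b) b = 1/16 * dist (p (i+2)) b"
    using gm2[OF gm, of "15/16"] by simp
  have "dist (p (i+2)) b \<le> dist (p (i+2)) (p (i+1)) + dist (p (i+1)) b" by (rule dist_triangle)
  have "dist (Mg (15/16) (p (i - 1)) a) (Mg (15/16) (p (i + 2)) b)
        \<le> dist (Mg (15/16) (p (i - 1)) a) a + dist a b + dist b (Mg (15/16) (p (i + 2)) b)"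
    using dist_triangle[of "Mg (15/16) (p (i - 1)) a" "Mg (15/16) (p (i + 2)) b" a] dist_triangle[of a "Mg (15/16) (p (i + 2)) b" b]
    by linarith
  moreover have "dist (p (i+2)) (p (i+1)) \<le> D" using B3 by (simp add: dist_commute)
  moreover have "dist (p (i+1)) b = 1/3 * dist (p i) (p (i+1))" using db by (simp add: dist_commute)
  moreover have "dist b (Mg (15/16) (p (i + 2)) b) = 1/16 * dist (p (i+2)) b" using t2 by (simp add: dist_commute)
  ultimately show ?thesis unfolding e1 e2
    using t1 da dab B1 B2 zero_le_dist[of "p i" "p (i+1)"] \<open>dist (p (i-1)) a \<le> _\<close> \<open>dist (p (i+2)) b \<le> _\<close>
    by linarith
qed

lemma step_odd:
  fixes p :: "int \<Rightarrow> 'a::metric_space"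
  assumes gm: "geodesic_means Mg" and B: "\<And>i. dist (p i) (p (i+1)) \<le> D"
  shows "dist (scheme Mg p (2*i+1)) (scheme Mg p (2*i+2)) \<le> 5/6*D"
proof -
  define c where "c = Mg (1/3) (p (i+1)) (p (i+2))"
  define b where "b = Mg (2/3) (p i) (p (i+1))"
  have e1: "scheme Mg p (2*i+2) = Mg (15/16) (p i) c"
  proof -
    have "(2*i+2) div 2 = i + 1" by simp
    moreover have "even (2*i+2)" by simp
    ultimately show ?thesis by (simp add: scheme_def c_def Let_def add.assoc)
  qed
  have e2: "scheme Mg p (2*i+1) = Mg (15/16) (p (i + 2)) b" by (simp add: scheme_def b_def)
  have B2: "dist (p i) (p (i+1)) \<le> D" using B[of i] by simp
  have B3: "dist (p (i+1)) (p (i+2)) \<le> D" using B[of "i+1"] by (simp add: add.assoc)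
  have dc: "dist (p (i+1)) c = 1/3 * dist (p (i+1)) (p (i+2))" using gm1[OF gm, of "1/3"] by (simp add: c_def)
  have db: "dist b (p (i+1)) = 1/3 * dist (p i) (p (i+1))" using gm2[OF gm, of "2/3"] by (simp add: b_def)
  have t1: "dist (Mg (15/16) (p i) c) c = 1/16 * dist (p i) c"
    using gm2[OF gm, of "15/16"] by simp
  have "dist (p i) c \<le> dist (p i) (p (i+1)) + dist (p (i+1)) c" by (rule dist_triangle)
  have t2: "dist (Mg (15/16) (p (i + 2)) b) b = 1/16 * dist (p (i+2)) b"
    using gm2[OF gm, of "15/16"] by simp
  have "dist (p (i+2)) b \<le> dist (p (i+2)) (p (i+1)) + dist (p (i+1)) b" by (rule dist_triangle)
  have "dist (Mg (15/16) (p (i + 2)) b) (Mg (15/16) (p i) c)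
        \<le> dist (Mg (15/16) (p (i + 2)) b) b + dist b (p (i+1)) + dist (p (i+1)) c + dist c (Mg (15/16) (p i) c)"
    using dist_triangle[of "Mg (15/16) (p (i + 2)) b" "Mg (15/16) (p i) c" b]
      dist_triangle[of b "Mg (15/16) (p i) c" "p (i+1)"]
      dist_triangle[of "p (i+1)" "Mg (15/16) (p i) c" c]
    by linarith
  moreover have "dist (p (i+2)) (p (i+1)) \<le> D" using B3 by (simp add: dist_commute)
  moreover have "dist (p (i+1)) b = 1/3 * dist (p i) (p (i+1))" using db by (simp add: dist_commute)
  moreover have "dist c (Mg (15/16) (p i) c) = 1/16 * dist (p i) c" using t1 by (simp add: dist_commute)
  ultimately show ?thesis unfolding e1 e2
    using t2 dc db B2 B3 zero_le_dist[of "p i" "p (i+1)"] \<open>dist (p i) c \<le> _\<close> \<open>dist (p (i+2)) b \<le> _\<close>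
    by linarith
qed

lemma near:
  fixes p :: "int \<Rightarrow> 'a::metric_space"
  assumes gm: "geodesic_means Mg" and B: "\<And>i. dist (p i) (p (i+1)) \<le> D"
  shows "dist (scheme Mg p j) (p (j div 2)) \<le> D"
proof (cases "even j")
  case True
  then obtain i where j: "j = 2*i" by blast
  define a where "a = Mg (1/3) (p i) (p (i+1))"
  have e1: "scheme Mg p j = Mg (15/16) (p (i - 1)) a" by (simp add: scheme_def a_def j)
  have B1: "dist (p (i-1)) (p i) \<le> D" using B[of "i-1"] by simp
  have B2: "dist (p i) (p (i+1)) \<le> D" using B[of i] by simp
  have da: "dist (p i) a = 1/3 * dist (p i) (p (i+1))" using gm1[OF gm, of "1/3"] by (simp add: a_def)
  have t1: "dist (Mg (15/16) (p (i - 1)) a) a = 1/16 * dist (p (i-1)) a"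
    using gm2[OF gm, of "15/16"] by simp
  have "dist (p (i-1)) a \<le> dist (p (i-1)) (p i) + dist (p i) a" by (rule dist_triangle)
  moreover have "dist (Mg (15/16) (p (i - 1)) a) (p i) \<le> dist (Mg (15/16) (p (i - 1)) a) a + dist (p i) a"
    using dist_triangle[of "Mg (15/16) (p (i - 1)) a" "p i" a] by (simp add: dist_commute)
  moreover have "j div 2 = i" using j by simp
  ultimately show ?thesis unfolding e1 using t1 da B1 B2 zero_le_dist[of "p i" "p (i+1)"] by (simp only:)
next
  case False
  then obtain i where j: "j = 2*i+1" by (metis oddE)
  define b where "b = Mg (2/3) (p i) (p (i+1))"
  have e2: "scheme Mg p j = Mg (15/16) (p (i + 2)) b" by (simp add: scheme_def b_def j)
  have B2: "dist (p i) (p (i+1)) \<le> D" using B[of i] by simp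
  have B3: "dist (p (i+1)) (p (i+2)) \<le> D" using B[of "i+1"] by (simp add: add.assoc)
  have db: "dist b (p (i+1)) = 1/3 * dist (p i) (p (i+1))" using gm2[OF gm, of "2/3"] by (simp add: b_def)
  have db2: "dist (p i) b = 2/3 * dist (p i) (p (i+1))" using gm1[OF gm, of "2/3"] by (simp add: b_def)
  have t2: "dist (Mg (15/16) (p (i + 2)) b) b = 1/16 * dist (p (i+2)) b"
    using gm2[OF gm, of "15/16"] by simp
  have "dist (p (i+2)) b \<le> dist (p (i+2)) (p (i+1)) + dist (p (i+1)) b" by (rule dist_triangle)
  moreover have "dist (Mg (15/16) (p (i + 2)) b) (p i) \<le> dist (Mg (15/16) (p (i + 2)) b) b + dist (p i) b"
    using dist_triangle[of "Mg (15/16) (p (i + 2)) b" "p i" b] by (simp add: dist_commute)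
  moreover have "dist (p (i+2)) (p (i+1)) \<le> D" using B3 by (simp add: dist_commute)
  moreover have "dist (p (i+1)) b = 1/3 * dist (p i) (p (i+1))" using db by (simp add: dist_commute)
  moreover have "j div 2 = i" using j by simp
  ultimately show ?thesis unfolding e2 using t2 db2 B2 zero_le_dist[of "p i" "p (i+1)"] by (simp only:)
qed

lemma step:
  fixes p :: "int \<Rightarrow> 'a::metric_space"
  assumes gm: "geodesic_means Mg" and B: "\<And>i. dist (p i) (p (i+1)) \<le> D"
  shows "dist (scheme Mg p j) (scheme Mg p (j+1)) \<le> 5/6*D"
proof (cases "even j")
  case True
  then obtain i where j: "j = 2*i" by blast
  show ?thesis using step_even[where p=p and D=D and i=i, OF gm B] j by simp
next
  case False
  then obtain i where j: "j = 2*i+1" by (metis oddE)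
  have "j + 1 = 2*i+2" using j by simp
  show ?thesis unfolding \<open>j + 1 = 2*i+2\<close> unfolding j using step_odd[where p=p and D=D and i=i, OF gm B] .
qed

lemma iter_bound:
  fixes p :: "int \<Rightarrow> 'a::metric_space"
  assumes gm: "geodesic_means Mg" and B: "\<And>i. dist (p i) (p (i+1)) \<le> D"
  shows "dist ((scheme Mg ^^ k) p i) ((scheme Mg ^^ k) p (i+1)) \<le> (5/6)^k * D"
proof (induction k arbitrary: i)
  case 0
  then show ?case using B by simp
next
  case (Suc k)
  have "dist (scheme Mg ((scheme Mg ^^ k) p) i) (scheme Mg ((scheme Mg ^^ k) p) (i+1)) \<le> 5/6 * ((5/6)^k * D)"
    by (rule step[where p="(scheme Mg ^^ k) p" and D="(5/6)^k*D", OF gm Suc.IH])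
  then show ?case by (simp add: mult.assoc)
qed

lemma floor_div2:
  fixes x :: real
  shows "\<lfloor>2 * x\<rfloor> div 2 = \<lfloor>x\<rfloor>"
proof -
  define m where "m = \<lfloor>2 * x\<rfloor>"
  define n where "n = \<lfloor>x\<rfloor>"
  have m1: "of_int m \<le> 2*x" "2*x < of_int m + 1" unfolding m_def by linarith+
  have n1: "of_int n \<le> x" "x < of_int n + 1" unfolding n_def by linarith+
  have "real_of_int (2*n) < of_int (m + 1)" using m1 n1 by simp
  then have a: "2*n \<le> m" by linarith
  have "real_of_int m < of_int (2*n+2)" using m1 n1 by simp
  then have b: "m < 2*n+2" by linarith
  from a b have "m div 2 = n" by presburger
  then show ?thesis unfolding m_def n_def .
qed

lemma geo_le:
  assumes gm: "geodesic_means Mg" and s: "s \<in> {0..1}" and d: "dist p0 p1 \<le> D"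
  shows "dist p0 (Mg s p0 p1) \<le> D"
proof -
  have "dist p0 (Mg s p0 p1) = s * dist p0 p1" by (rule gm1[OF gm s])
  also have "\<dots> \<le> 1 * dist p0 p1" using s by (intro mult_right_mono) auto
  finally show ?thesis using d by simp
qed

lemma PG_step:
  fixes q :: "int \<Rightarrow> 'a::metric_space"
  assumes gm: "geodesic_means Mg" and B: "\<And>i. dist (q i) (q (i+1)) \<le> D"
  shows "dist (PG Mg (Suc k) (scheme Mg q) t) (PG Mg k q t) \<le> 3*D"
proof -
  have D0: "0 \<le> D" using B[of 0] zero_le_dist[of "q 0" "q (0+1)"] by linarith
  define x where "x = 2^k * t"
  define n where "n = \<lfloor>x\<rfloor>"
  define m where "m = \<lfloor>2*x\<rfloor>"
  define q' where "q' = scheme Mg q"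
  have B': "dist (q' i) (q' (i+1)) \<le> D" for i
    using step[where p=q and D=D and j=i, OF gm B] D0 unfolding q'_def by linarith
  have e1: "PG Mg k q t = Mg (x - of_int n) (q n) (q (n+1))"
    by (simp add: PG_def Let_def x_def n_def)
  have e2: "PG Mg (Suc k) q' t = Mg (2*x - of_int m) (q' m) (q' (m+1))"
    by (simp add: PG_def Let_def x_def m_def mult.assoc)
  have s1: "x - of_int n \<in> {0..1}" unfolding n_def by auto linarith
  have s2: "2*x - of_int m \<in> {0..1}" unfolding m_def by auto linarith
  have d1: "dist (q n) (PG Mg k q t) \<le> D" unfolding e1 by (rule geo_le[OF gm s1 B])
  have d2: "dist (q' m) (PG Mg (Suc k) q' t) \<le> D" unfolding e2 by (rule geo_le[OF gm s2 B'])
  have "m div 2 = n" unfolding m_def n_def by (rule floor_div2)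
  then have d3: "dist (q' m) (q n) \<le> D" using near[where p=q and D=D and j=m, OF gm B] unfolding q'_def by simp
  have "dist (PG Mg (Suc k) q' t) (PG Mg k q t) \<le> dist (PG Mg (Suc k) q' t) (q' m) + dist (q' m) (PG Mg k q t)"
    by (rule dist_triangle)
  moreover have "dist (q' m) (PG Mg k q t) \<le> dist (q' m) (q n) + dist (q n) (PG Mg k q t)"
    by (rule dist_triangle)
  ultimately show ?thesis using d1 d2 d3 unfolding q'_def by (simp add: dist_commute)
qed

lemma cum_bound:
  fixes f :: "nat \<Rightarrow> 'b \<Rightarrow> 'a::metric_space"
  assumes S: "\<And>k t. dist (f (Suc k) t) (f k t) \<le> C * (5/6)^k"
  shows "dist (f (n+d) t) (f n t) \<le> 6*C*((5/6)^n - (5/6)^(n+d))"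
proof (induction d)
  case 0
  then show ?case by simp
next
  case (Suc d)
  have "dist (f (n + Suc d) t) (f n t) \<le> dist (f (Suc (n+d)) t) (f (n+d) t) + dist (f (n+d) t) (f n t)"
    using dist_triangle[of "f (Suc (n+d)) t" "f n t" "f (n+d) t"] by simp
  also have "\<dots> \<le> C * (5/6)^(n+d) + 6*C*((5/6)^n - (5/6)^(n+d))"
    using S[of "n+d" t] Suc.IH by linarith
  also have "\<dots> = 6*C*((5/6)^n - (5/6)^(n + Suc d))"
    by (simp add: algebra_simps)
  finally show ?case .
qed

lemma unif_conv:
  fixes f :: "nat \<Rightarrow> 'b \<Rightarrow> 'a::complete_space"
  assumes S: "\<And>k t. dist (f (Suc k) t) (f k t) \<le> C * (5/6)^k" and C: "0 \<le> C"
  shows "\<exists>g. uniform_limit UNIV f g sequentially"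
proof -
  have cb: "dist (f m t) (f M t) \<le> 6*C*(5/6)^M" if "M \<le> m" for m M t
  proof -
    define d where "d = m - M"
    have md: "m = M + d" using that unfolding d_def by simp
    have "dist (f (M+d) t) (f M t) \<le> 6*C*((5/6)^M - (5/6)^(M+d))"
      by (rule cum_bound[OF S])
    then have "dist (f m t) (f M t) \<le> 6*C*((5/6)^M - (5/6)^(M+d))"
      unfolding md .
    also have "\<dots> \<le> 6*C*(5/6)^M" using C by (intro mult_left_mono) auto
    finally show ?thesis .
  qed
  have "uniformly_Cauchy_on UNIV f"
  proof (rule uniformly_Cauchy_onI)
    fix e :: real assume e: "0 < e"
    obtain M where M: "(5/6::real)^M < e / (12*C+1)"
      using real_arch_pow_inv[of "e / (12*C+1)" "5/6::real"] e C by auto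
    have "12*C*(5/6::real)^M \<le> (12*C+1) * (5/6)^M" by simp
    also have "\<dots> < e" using M C by (simp add: field_simps)
    finally have Me: "12*C*(5/6::real)^M < e" .
    show "\<exists>M. \<forall>x\<in>UNIV. \<forall>m\<ge>M. \<forall>n\<ge>M. dist (f m x) (f n x) < e"
    proof (intro exI ballI allI impI)
      fix x m n assume "M \<le> m" "M \<le> n"
      then have "dist (f m x) (f M x) \<le> 6*C*(5/6)^M" "dist (f n x) (f M x) \<le> 6*C*(5/6)^M"
        using cb by blast+
      then show "dist (f m x) (f n x) < e"
        using dist_triangle[of "f m x" "f n x" "f M x"] Me by (simp add: dist_commute)
    qed
  qed
  then show ?thesis using Cauchy_uniformly_convergent uniformly_convergent_on_def by blast
qed

theorem mainTheorem11:
  fixes Mg :: "real \<Rightarrow> 'a::complete_space \<Rightarrow> 'a \<Rightarrow> 'a"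
  assumes "geodesic_means Mg"
  shows "(\<forall>p :: int \<Rightarrow> 'a. delta p < \<infinity> \<longrightarrow> delta (scheme Mg p) \<le> ereal (5/6) * delta p)
       \<and> (\<forall>p :: int \<Rightarrow> 'a. delta p < \<infinity> \<longrightarrow>
            (\<exists>g. uniform_limit UNIV (\<lambda>k. PG Mg k ((scheme Mg ^^ k) p)) g sequentially))"
proof -
  note gm = assms
  have fin: "\<exists>D. delta p = ereal D \<and> 0 \<le> D \<and> (\<forall>i. dist (p i) (p (i+1)) \<le> D)"
    if lt: "delta p < \<infinity>" for p :: "int \<Rightarrow> 'a"
  proof -
    have up: "ereal (dist (p i) (p (i+1))) \<le> delta p" for i
      unfolding delta_def by (rule SUP_upper) simp
    have "0 \<le> delta p" using up[of 0] zero_le_dist[of "p 0" "p (0+1)"]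
      by (meson ereal_less_eq(5) order_trans)
    then obtain D where D: "delta p = ereal D" using lt
      by (cases "delta p") auto
    show ?thesis using up D \<open>0 \<le> delta p\<close> by auto
  qed
  have P1: "delta (scheme Mg p) \<le> ereal (5/6) * delta p" if lt: "delta p < \<infinity>" for p :: "int \<Rightarrow> 'a"
  proof -
    obtain D where D: "delta p = ereal D" "0 \<le> D" "\<And>i. dist (p i) (p (i+1)) \<le> D"
      using fin[OF lt] by blast
    have "delta (scheme Mg p) \<le> ereal (5/6 * D)"
      unfolding delta_def
    proof (rule SUP_least)
      fix i show "ereal (dist (scheme Mg p i) (scheme Mg p (i + 1))) \<le> ereal (5 / 6 * D)"
        using step[where p=p and D=D and j=i, OF gm D(3)] by simp
    qed
    then show ?thesis using D by simp
  qed
  have P2: "\<exists>g. uniform_limit UNIV (\<lambda>k. PG Mg k ((scheme Mg ^^ k) p)) g sequentially"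
    if lt: "delta p < \<infinity>" for p :: "int \<Rightarrow> 'a"
  proof -
    obtain D where D: "delta p = ereal D" "0 \<le> D" "\<And>i. dist (p i) (p (i+1)) \<le> D"
      using fin[OF lt] by blast
    show ?thesis
    proof (rule unif_conv[where C="3*D"])
      fix k t
      have "dist (PG Mg (Suc k) (scheme Mg ((scheme Mg ^^ k) p)) t) (PG Mg k ((scheme Mg ^^ k) p) t)
            \<le> 3 * ((5/6)^k * D)"
        by (rule PG_step[where q="(scheme Mg ^^ k) p" and D="(5/6)^k*D", OF gm iter_bound[where p=p and D=D and k=k, OF gm D(3)]])
      then show "dist (PG Mg (Suc k) ((scheme Mg ^^ Suc k) p) t) (PG Mg k ((scheme Mg ^^ k) p) t) \<le> 3*D * (5/6)^k"
        by (simp add: mult_ac)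
    next
      show "0 \<le> 3*D" using D by simp
    qed
  qed
  show ?thesis using P1 P2 by blast
qed

end
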